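(* Let $(G,S)$ and $(H,S)$ be two compatible $d$-labeled boundaried graphs such that $\mathbf{Aux}(G,S)\oplus\mathbf{Aux}(H,S)$ has no cycles. If $F$ is an $S$-block of $(G,S)\oplus(H,S)$ and $uv$ is an edge of $F$, then $uv$ is contained in some $S$-block of $G$ or of $H$.
   Context: A block of a graph is a maximal connected subgraph without a cut vertex. A block $d$-labeling of a graph whose blocks have at most $d$ vertices is a map $V(G)\to[d]$ injective on each block; a $d$-labeled boundaried graph is a pair $(G,S)$ with $S\subseteq V(G)$ and $G$ carrying such a labeling. $(G,S)$ and $(H,S)$ are compatible if $V(G-S)\cap V(H-S)=\emptyset$, $G[S]=H[S]$, and labels agree on $S$. The sum $(G,S)\oplus(H,S)$ is the graph obtained from the disjoint union of $G$ and $H$ by identifying corresponding vertices of $S$ and removing duplicate edges inside $S$. For a boundaried graph $(G,S)$, an $S$-block is a block of $G$ containing an edge of $G[S]$ (for the sum, $S$-blocks are blocks of the sum containing an edge of $G[S]$). $\mathbf{Aux}(G,S)$ is the bipartite graph whose vertices are the connected components of $G$ and the connected components of $G[S]$, a component $C_1$ of $G$ adjacent to a component $C_2$ of $G[S]$ iff $C_2\subseteq C_1$; $\mathbf{Aux}(G,S)\oplus\mathbf{Aux}(H,S)$ is the disjoint union of $\mathbf{Aux}(G,S)$ and $\mathbf{Aux}(H,S)$ with the vertices corresponding to the same component of $G[S]=H[S]$ identified. *)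

theory Defs
  imports Main
begin

type_synonym 'a graph = "'a set \<times> 'a set set"

definition verts :: "'a graph \<Rightarrow> 'a set" where "verts G = fst G"
definition edges :: "'a graph \<Rightarrow> 'a set set" where "edges G = snd G"

definition wf_graph :: "'a graph \<Rightarrow> bool" where
  "wf_graph G \<longleftrightarrow> finite (verts G) \<and>
     (\<forall>e\<in>edges G. \<exists>u v. e = {u, v} \<and> u \<noteq> v \<and> u \<in> verts G \<and> v \<in> verts G)"

definition adj_rel :: "'a graph \<Rightarrow> ('a \<times> 'a) set" where
  "adj_rel G = {(x, y). {x, y} \<in> edges G}"

definition reach :: "'a graph \<Rightarrow> 'a \<Rightarrow> 'a \<Rightarrow> bool" where
  "reach G x y \<longleftrightarrow> x \<in> verts G \<and> (x, y) \<in> (adj_rel G)\<^sup>*"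

definition connected_graph :: "'a graph \<Rightarrow> bool" where
  "connected_graph G \<longleftrightarrow> verts G \<noteq> {} \<and> (\<forall>x\<in>verts G. \<forall>y\<in>verts G. reach G x y)"

definition components :: "'a graph \<Rightarrow> 'a set set" where
  "components G = (\<lambda>x. {y. reach G x y}) ` verts G"

definition del_vertex :: "'a graph \<Rightarrow> 'a \<Rightarrow> 'a graph" where
  "del_vertex G v = (verts G - {v}, {e \<in> edges G. v \<notin> e})"

definition cut_vertex :: "'a graph \<Rightarrow> 'a \<Rightarrow> bool" where
  "cut_vertex G v \<longleftrightarrow> v \<in> verts G \<and>
     (\<exists>x\<in>verts G - {v}. \<exists>y\<in>verts G - {v}. reach G x y \<and> \<not> reach (del_vertex G v) x y)"

definition subgraph :: "'a graph \<Rightarrow> 'a graph \<Rightarrow> bool" where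
  "subgraph B G \<longleftrightarrow> wf_graph B \<and> verts B \<subseteq> verts G \<and> edges B \<subseteq> edges G"

definition induced :: "'a graph \<Rightarrow> 'a set \<Rightarrow> 'a graph" where
  "induced G S = (S, {e \<in> edges G. e \<subseteq> S})"

definition biconn_candidate :: "'a graph \<Rightarrow> 'a graph \<Rightarrow> bool" where
  "biconn_candidate G B \<longleftrightarrow> subgraph B G \<and> connected_graph B \<and> (\<forall>v. \<not> cut_vertex B v)"

definition is_block :: "'a graph \<Rightarrow> 'a graph \<Rightarrow> bool" where
  "is_block G B \<longleftrightarrow> biconn_candidate G B \<and>
     (\<forall>B'. biconn_candidate G B' \<and> verts B \<subseteq> verts B' \<and> edges B \<subseteq> edges B' \<longrightarrow> B' = B)"

definition block_labeling :: "nat \<Rightarrow> 'a graph \<Rightarrow> ('a \<Rightarrow> nat) \<Rightarrow> bool" where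
  "block_labeling d G lab \<longleftrightarrow>
     (\<forall>B. is_block G B \<longrightarrow> card (verts B) \<le> d \<and> inj_on lab (verts B)) \<and>
     lab ` verts G \<subseteq> {1..d}"

definition labeled_boundaried :: "nat \<Rightarrow> 'a graph \<Rightarrow> 'a set \<Rightarrow> ('a \<Rightarrow> nat) \<Rightarrow> bool" where
  "labeled_boundaried d G S lab \<longleftrightarrow> wf_graph G \<and> S \<subseteq> verts G \<and> block_labeling d G lab"

definition compatible ::
  "'a graph \<Rightarrow> ('a \<Rightarrow> nat) \<Rightarrow> 'a graph \<Rightarrow> ('a \<Rightarrow> nat) \<Rightarrow> 'a set \<Rightarrow> bool" where
  "compatible G labG H labH S \<longleftrightarrow>
     (verts G - S) \<inter> (verts H - S) = {} \<and> induced G S = induced H S \<and>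
     (\<forall>x\<in>S. labG x = labH x)"

text \<open>The sum: union of the two graphs (shared vertices are exactly those of S).\<close>
definition gsum :: "'a graph \<Rightarrow> 'a graph \<Rightarrow> 'a graph" where
  "gsum G H = (verts G \<union> verts H, edges G \<union> edges H)"

text \<open>S-block of (G,S) (with S-edges taken from the graph G0 providing G0[S]).\<close>
definition S_block :: "'a graph \<Rightarrow> 'a graph \<Rightarrow> 'a set \<Rightarrow> 'a graph \<Rightarrow> bool" where
  "S_block G G0 S B \<longleftrightarrow> is_block G B \<and> (\<exists>e\<in>edges (induced G0 S). e \<in> edges B)"

text \<open>Aux(G,S) \<oplus> Aux(H,S): vertices (0,D) for components D of G[S]=H[S],
  (1,C) for components of G, (2,C) for components of H.\<close>
definition aux_sum :: "'a graph \<Rightarrow> 'a graph \<Rightarrow> 'a set \<Rightarrow> (nat \<times> 'a set) graph" where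
  "aux_sum G H S =
    ({(0, D) | D. D \<in> components (induced G S)} \<union>
     {(1, C) | C. C \<in> components G} \<union> {(2, C) | C. C \<in> components H},
     {{(1, C), (0, D)} | C D. C \<in> components G \<and> D \<in> components (induced G S) \<and> D \<subseteq> C} \<union>
     {{(2, C), (0, D)} | C D. C \<in> components H \<and> D \<in> components (induced H S) \<and> D \<subseteq> C})"

definition has_cycle :: "'b graph \<Rightarrow> bool" where
  "has_cycle G \<longleftrightarrow> (\<exists>vs. length vs \<ge> 3 \<and> distinct vs \<and> set vs \<subseteq> verts G \<and>
     (\<forall>i. Suc i < length vs \<longrightarrow> {vs ! i, vs ! Suc i} \<in> edges G) \<and>
     {last vs, hd vs} \<in> edges G)"

end

theory Submission
  imports Defs "HOL-Library.Transitive_Closure_Table" "HOL-Library.Product_Order"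
begin

definition eadj :: "'a set set \<Rightarrow> ('a \<times> 'a) set" where
  "eadj E = {(x, y). {x, y} \<in> E}"

lemma adj_rel_eadj: "adj_rel G = eadj (edges G)"
  by (simp add: adj_rel_def eadj_def)

lemma eadj_sym: "(x, y) \<in> eadj E \<Longrightarrow> (y, x) \<in> eadj E"
  by (simp add: eadj_def insert_commute)

lemma eadj_rtrancl_sym: "(x, y) \<in> (eadj E)\<^sup>* \<Longrightarrow> (y, x) \<in> (eadj E)\<^sup>*"
proof (induction rule: rtrancl_induct)
  case base then show ?case by simp
next
  case (step y z)
  then show ?case by (meson converse_rtrancl_into_rtrancl eadj_sym)
qed

lemma eadj_mono: "E \<subseteq> E' \<Longrightarrow> (x, y) \<in> (eadj E)\<^sup>* \<Longrightarrow> (x, y) \<in> (eadj E')\<^sup>*"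
proof -
  assume "E \<subseteq> E'" "(x, y) \<in> (eadj E)\<^sup>*"
  moreover have "eadj E \<subseteq> eadj E'" using \<open>E \<subseteq> E'\<close> by (auto simp: eadj_def)
  ultimately show ?thesis using rtrancl_mono by blast
qed

lemma wf_edge: "wf_graph G \<Longrightarrow> {x, y} \<in> edges G \<Longrightarrow> x \<in> verts G \<and> y \<in> verts G \<and> x \<noteq> y"
proof -
  assume w: "wf_graph G" and e: "{x, y} \<in> edges G"
  then obtain a b where ab: "{x, y} = {a, b}" "a \<noteq> b" "a \<in> verts G" "b \<in> verts G"
    unfolding wf_graph_def by blast
  from ab(1) have "(x = a \<and> y = b) \<or> (x = b \<and> y = a)" by (simp add: doubleton_eq_iff)
  then show ?thesis using ab by auto
qed

lemma reach_verts: "wf_graph G \<Longrightarrow> reach G x y \<Longrightarrow> y \<in> verts G"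
  unfolding reach_def adj_rel_eadj
proof -
  assume w: "wf_graph G" and h: "x \<in> verts G \<and> (x, y) \<in> (eadj (edges G))\<^sup>*"
  from h have "(x, y) \<in> (eadj (edges G))\<^sup>*" by simp
  then show "y \<in> verts G"
  proof (induction rule: rtrancl_induct)
    case base then show ?case using h by simp
  next
    case (step y z) then show ?case using wf_edge[OF w, of y z] by (simp add: eadj_def)
  qed
qed

lemma reach_refl: "x \<in> verts G \<Longrightarrow> reach G x x"
  by (simp add: reach_def)

lemma reach_sym: "wf_graph G \<Longrightarrow> reach G x y \<Longrightarrow> reach G y x"
proof -
  assume w: "wf_graph G" and r: "reach G x y"
  have "y \<in> verts G" using reach_verts[OF w r] .
  moreover have "(y, x) \<in> (adj_rel G)\<^sup>*"
  proof -
    have "(x, y) \<in> (eadj (edges G))\<^sup>*" using r unfolding reach_def adj_rel_eadj by simp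
    then show ?thesis unfolding adj_rel_eadj by (rule eadj_rtrancl_sym)
  qed
  ultimately show ?thesis unfolding reach_def by simp
qed

lemma reach_trans: "reach G x y \<Longrightarrow> reach G y z \<Longrightarrow> reach G x z"
  unfolding reach_def using rtrancl_trans by metis

lemma reach_mono: "verts X \<subseteq> verts Y \<Longrightarrow> edges X \<subseteq> edges Y \<Longrightarrow> reach X a b \<Longrightarrow> reach Y a b"
proof -
  assume a: "verts X \<subseteq> verts Y" "edges X \<subseteq> edges Y" "reach X a b"
  then have "(a, b) \<in> (eadj (edges Y))\<^sup>*" using eadj_mono[OF a(2)] unfolding reach_def adj_rel_eadj by blast
  then show ?thesis using a unfolding reach_def adj_rel_eadj by blast
qed

lemma reach_edge: "x \<in> verts G \<Longrightarrow> {x, y} \<in> edges G \<Longrightarrow> reach G x y"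
  unfolding reach_def adj_rel_eadj eadj_def by auto

lemma wf_del: "wf_graph G \<Longrightarrow> wf_graph (del_vertex G w)"
  unfolding wf_graph_def del_vertex_def verts_def edges_def by fastforce

lemma del_nonvert: "wf_graph G \<Longrightarrow> w \<notin> verts G \<Longrightarrow> del_vertex G w = G"
proof -
  assume a: "wf_graph G" "w \<notin> verts G"
  have "{e \<in> edges G. w \<notin> e} = edges G"
  proof (intro equalityI subsetI)
    fix e assume "e \<in> edges G"
    then obtain x y where "e = {x, y}" "x \<in> verts G" "y \<in> verts G" using a(1) unfolding wf_graph_def by blast
    then show "e \<in> {e \<in> edges G. w \<notin> e}" using a(2) \<open>e \<in> edges G\<close> by auto
  qed auto
  then show ?thesis using a(2) unfolding del_vertex_def verts_def edges_def by (cases G) auto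
qed

lemma verts_del[simp]: "verts (del_vertex G w) = verts G - {w}"
  by (simp add: del_vertex_def verts_def)
lemma edges_del[simp]: "edges (del_vertex G w) = {e \<in> edges G. w \<notin> e}"
  by (simp add: del_vertex_def edges_def)

lemma biconn_reach_del:
  assumes "biconn_candidate G B" "x \<in> verts B - {w}" "y \<in> verts B - {w}"
  shows "reach (del_vertex B w) x y"
proof -
  have wfB: "wf_graph B" using assms(1) by (simp add: biconn_candidate_def subgraph_def)
  have r: "reach B x y" using assms by (auto simp: biconn_candidate_def connected_graph_def)
  show ?thesis
  proof (cases "w \<in> verts B")
    case True
    then show ?thesis using assms r by (auto simp: biconn_candidate_def cut_vertex_def)
  next
    case False
    then show ?thesis using del_nonvert[OF wfB False] r by simp
  qed
qed


fun pe :: "'a list \<Rightarrow> 'a set set" where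
  "pe (a # b # xs) = insert {a, b} (pe (b # xs))"
| "pe _ = {}"

lemma pe_sub: "e \<in> pe ps \<Longrightarrow> e \<subseteq> set ps"
  by (induction ps rule: pe.induct) auto

lemma pe_reach: "ps \<noteq> [] \<Longrightarrow> (hd ps, last ps) \<in> (eadj (pe ps))\<^sup>*"
proof (induction ps rule: pe.induct)
  case (1 a b xs)
  have "(b, last (b # xs)) \<in> (eadj (pe (b # xs)))\<^sup>*" using 1 by simp
  then have "(b, last (b # xs)) \<in> (eadj (pe (a # b # xs)))\<^sup>*"
    by (rule eadj_mono[rotated]) auto
  moreover have "(a, b) \<in> eadj (pe (a # b # xs))" by (simp add: eadj_def)
  ultimately show ?case by (simp add: converse_rtrancl_into_rtrancl)
qed auto

lemma pe_take: "pe (take n ps) \<subseteq> pe ps"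
proof (induction ps arbitrary: n rule: pe.induct)
  case (1 a b xs)
  show ?case
  proof (cases n)
    case 0 then show ?thesis by simp
  next
    case (Suc m)
    show ?thesis
    proof (cases m)
      case 0 then show ?thesis using Suc by simp
    next
      case (Suc k)
      have "take n (a # b # xs) = a # take m (b # xs)" using \<open>n = Suc m\<close> by simp
      also have "\<dots> = a # b # take k xs" using Suc by simp
      finally have "pe (take n (a # b # xs)) = insert {a, b} (pe (take m (b # xs)))"
        using Suc by simp
      then show ?thesis using "1.IH"[of m] by auto
    qed
  qed
next
  case ("2_2" v)
  then show ?case by (cases n) auto
qed auto

lemma pe_drop: "pe (drop n ps) \<subseteq> pe ps"
proof (induction ps arbitrary: n rule: pe.induct)
  case (1 a b xs)
  show ?case
  proof (cases n)
    case 0 then show ?thesis by simp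
  next
    case (Suc m)
    then show ?thesis using "1.IH"[of m] by auto
  qed
next
  case ("2_2" v)
  then show ?case by (cases n) auto
qed auto

lemma rtrancl_path_pe: "rtrancl_path (\<lambda>a b. (a, b) \<in> eadj E) x xs y \<Longrightarrow> pe (x # xs) \<subseteq> E \<and> last (x # xs) = y"
proof (induction rule: rtrancl_path.induct)
  case (base x) then show ?case by simp
next
  case (step x y ys z)
  then show ?case by (cases ys) (auto simp: eadj_def)
qed

lemma pe_wf: "distinct ps \<Longrightarrow> e \<in> pe ps \<Longrightarrow> \<exists>a b. e = {a, b} \<and> a \<noteq> b \<and> a \<in> set ps \<and> b \<in> set ps"
  by (induction ps rule: pe.induct) auto

lemma pe_cover: "2 \<le> length ps \<Longrightarrow> x \<in> set ps \<Longrightarrow> \<exists>e\<in>pe ps. x \<in> e"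
proof (induction ps rule: pe.induct)
  case (1 a b xs)
  show ?case
  proof (cases "x = a \<or> x = b")
    case True then show ?thesis by auto
  next
    case False
    then have "x \<in> set xs" using 1 by auto
    then have "2 \<le> length (b # xs)" by (cases xs) auto
    then show ?thesis using 1 False by auto
  qed
qed auto

lemma graph_eqI: "verts X = verts Y \<Longrightarrow> edges X = edges Y \<Longrightarrow> X = Y"
  by (cases X, cases Y) (simp add: verts_def edges_def)

lemma biconn_wf: "biconn_candidate G B \<Longrightarrow> wf_graph B"
  by (simp add: biconn_candidate_def subgraph_def)

lemma path_prefix_reach:
  assumes "i < length ps" "w \<notin> set (take (Suc i) ps)" "pe ps \<subseteq> E"
  shows "(hd ps, ps ! i) \<in> (eadj {e \<in> E. w \<notin> e})\<^sup>*"
proof -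
  let ?q = "take (Suc i) ps"
  have ne: "?q \<noteq> []" using assms(1) by (cases ps) auto
  have "hd ?q = hd ps" using assms(1) by (cases ps) auto
  moreover have "last ?q = ps ! i" using assms(1) by (simp add: take_Suc_conv_app_nth)
  moreover have "pe ?q \<subseteq> {e \<in> E. w \<notin> e}"
    using pe_take[of "Suc i" ps] assms(2,3) pe_sub[of _ ?q] by blast
  ultimately show ?thesis using pe_reach[OF ne] eadj_mono by metis
qed

lemma path_suffix_reach:
  assumes "i < length ps" "w \<notin> set (drop i ps)" "pe ps \<subseteq> E"
  shows "(ps ! i, last ps) \<in> (eadj {e \<in> E. w \<notin> e})\<^sup>*"
proof -
  let ?q = "drop i ps"
  have ne: "?q \<noteq> []" using assms(1) by simp
  have "hd ?q = ps ! i" using assms(1) by (simp add: hd_drop_conv_nth)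
  moreover have "last ?q = last ps" using assms(1) by simp
  moreover have "pe ?q \<subseteq> {e \<in> E. w \<notin> e}"
    using pe_drop[of i ps] assms(2,3) pe_sub[of _ ?q] by blast
  ultimately show ?thesis using pe_reach[OF ne] eadj_mono by metis
qed


lemma ear:
  assumes bc: "biconn_candidate G B" and wfG: "wf_graph G"
    and d: "distinct ps" and ne: "ps \<noteq> []"
    and hB: "hd ps \<in> verts B" and lB: "last ps \<in> verts B" and hl: "hd ps \<noteq> last ps"
    and peG: "pe ps \<subseteq> edges G"
  shows "biconn_candidate G (verts B \<union> set ps, edges B \<union> pe ps)"
proof -
  define B' where "B' = (verts B \<union> set ps, edges B \<union> pe ps)"
  have vB'[simp]: "verts B' = verts B \<union> set ps" by (simp add: B'_def verts_def)
  have eB'[simp]: "edges B' = edges B \<union> pe ps" by (simp add: B'_def edges_def)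
  have wfB: "wf_graph B" using bc by (rule biconn_wf)
  have subB: "verts B \<subseteq> verts G" "edges B \<subseteq> edges G" using bc by (auto simp: biconn_candidate_def subgraph_def)
  have len: "2 \<le> length ps"
  proof (rule ccontr)
    assume "\<not> 2 \<le> length ps"
    then obtain a where "ps = [a]" using ne by (cases ps) (auto, case_tac list, auto)
    then show False using hl by simp
  qed
  have psG: "set ps \<subseteq> verts G"
  proof
    fix x assume "x \<in> set ps"
    then obtain e where e: "e \<in> pe ps" "x \<in> e" using pe_cover[OF len] by blast
    then obtain a b where "e = {a, b}" using pe_wf[OF d] by blast
    then show "x \<in> verts G" using e peG wf_edge[OF wfG, of a b] by auto
  qed
  have wfB': "wf_graph B'"
  proof -
    have "finite (verts B)" using wfB by (simp add: wf_graph_def)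
    moreover have "\<forall>e\<in>edges B. \<exists>u v. e = {u, v} \<and> u \<noteq> v \<and> u \<in> verts B \<and> v \<in> verts B"
      using wfB by (simp add: wf_graph_def)
    moreover have "\<forall>e\<in>pe ps. \<exists>u v. e = {u, v} \<and> u \<noteq> v \<and> u \<in> set ps \<and> v \<in> set ps"
      using pe_wf[OF d] by blast
    ultimately have "\<forall>e\<in>edges B'. \<exists>u v. e = {u, v} \<and> u \<noteq> v \<and> u \<in> verts B' \<and> v \<in> verts B'"
      unfolding vB' eB' by (metis (no_types, lifting) Un_iff)
    moreover have "finite (verts B')" using \<open>finite (verts B)\<close> by simp
    ultimately show ?thesis unfolding wf_graph_def by blast
  qed
  have sub: "subgraph B' G" using wfB' subB psG peG by (auto simp: subgraph_def)
  have wfd: "\<And>w. wf_graph (del_vertex B' w)" using wf_del[OF wfB'] .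
  have att: "\<exists>b\<in>verts B - {w}. reach (del_vertex B' w) z b" if z: "z \<in> verts B' - {w}" for w z
  proof (cases "z \<in> verts B")
    case True
    then show ?thesis using z by (intro bexI[of _ z] reach_refl) auto
  next
    case False
    then have zp: "z \<in> set ps" using z by auto
    then obtain i where i: "i < length ps" "ps ! i = z" by (auto simp: in_set_conv_nth)
    have pe': "pe ps \<subseteq> edges B'" by simp
    show ?thesis
    proof (cases "w \<in> set (take (Suc i) ps)")
      case False
      have "(hd ps, ps ! i) \<in> (eadj {e \<in> edges B'. w \<notin> e})\<^sup>*"
        by (rule path_prefix_reach[OF i(1) False pe'])
      then have "(z, hd ps) \<in> (eadj (edges (del_vertex B' w)))\<^sup>*"
        using i(2) eadj_rtrancl_sym by simp
      moreover have "hd ps \<noteq> w"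
        using False ne by (cases ps) auto
      ultimately show ?thesis using z hB unfolding reach_def adj_rel_eadj by auto
    next
      case True
      have "w \<noteq> z" using z by auto
      have "set (take (Suc i) ps) \<inter> set (drop (Suc i) ps) = {}"
        using d by (metis append_take_drop_id distinct_append)
      moreover have "drop i ps = z # drop (Suc i) ps" using i by (metis Cons_nth_drop_Suc)
      ultimately have wnd: "w \<notin> set (drop i ps)" using True \<open>w \<noteq> z\<close> by auto
      have "(ps ! i, last ps) \<in> (eadj {e \<in> edges B'. w \<notin> e})\<^sup>*"
        by (rule path_suffix_reach[OF i(1) wnd pe'])
      then have "(z, last ps) \<in> (eadj (edges (del_vertex B' w)))\<^sup>*"
        using i(2) by simp
      moreover have "last ps \<noteq> w"
        using wnd i(1) by (metis last_drop last_in_set drop_eq_Nil not_le)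
      ultimately show ?thesis using z lB unfolding reach_def adj_rel_eadj by auto
    qed
  qed
  have Bdel: "reach (del_vertex B' w) b1 b2" if "b1 \<in> verts B - {w}" "b2 \<in> verts B - {w}" for w b1 b2
  proof -
    have "reach (del_vertex B w) b1 b2" using biconn_reach_del[OF bc that] .
    then show ?thesis by (rule reach_mono[rotated 2]) auto
  qed
  have alldel: "reach (del_vertex B' w) x y" if xy: "x \<in> verts B' - {w}" "y \<in> verts B' - {w}" for w x y
  proof -
    obtain bx where bx: "bx \<in> verts B - {w}" "reach (del_vertex B' w) x bx" using att[OF xy(1)] by blast
    obtain "by" where by': "by \<in> verts B - {w}" "reach (del_vertex B' w) y by" using att[OF xy(2)] by blast
    have "reach (del_vertex B' w) bx by" using Bdel[OF bx(1) by'(1)] .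
    moreover have "reach (del_vertex B' w) by y" using reach_sym[OF wfd by'(2)] .
    ultimately show ?thesis using bx(2) reach_trans by metis
  qed
  have conn: "connected_graph B'"
  proof -
    have toh: "reach B' z (hd ps)" if "z \<in> verts B'" for z
    proof (cases "z \<in> verts B")
      case True
      have "reach B z (hd ps)" using bc True hB by (auto simp: biconn_candidate_def connected_graph_def)
      then show ?thesis by (rule reach_mono[rotated 2]) auto
    next
      case False
      then have zp: "z \<in> set ps" using that by auto
      then obtain i where i: "i < length ps" "ps ! i = z" by (auto simp: in_set_conv_nth)
      have "pe (take (Suc i) ps) \<subseteq> edges B'" using pe_take by auto
      moreover have "(hd (take (Suc i) ps), last (take (Suc i) ps)) \<in> (eadj (pe (take (Suc i) ps)))\<^sup>*"
        using pe_reach[of "take (Suc i) ps"] ne by simp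
      moreover have "hd (take (Suc i) ps) = hd ps" using ne by (cases ps) auto
      moreover have "last (take (Suc i) ps) = z" using i by (simp add: take_Suc_conv_app_nth)
      ultimately have "(hd ps, z) \<in> (eadj (edges B'))\<^sup>*" using eadj_mono by metis
      then have "(z, hd ps) \<in> (eadj (edges B'))\<^sup>*" by (rule eadj_rtrancl_sym)
      then show ?thesis using that unfolding reach_def adj_rel_eadj by simp
    qed
    show ?thesis unfolding connected_graph_def
    proof (intro conjI ballI)
      show "verts B' \<noteq> {}" using hB by auto
    next
      fix x y assume "x \<in> verts B'" "y \<in> verts B'"
      then show "reach B' x y" using toh reach_sym[OF wfB'] reach_trans by metis
    qed
  qed
  have nocut: "\<not> cut_vertex B' w" for w
    using alldel unfolding cut_vertex_def by blast
  show ?thesis using sub conn nocut unfolding biconn_candidate_def B'_def[symmetric] by blast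
qed

lemma edge_candidate:
  assumes wfG: "wf_graph G" and e: "{u, v} \<in> edges G"
  shows "biconn_candidate G ({u, v}, {{u, v}})"
proof -
  define K :: "'a graph" where "K = ({u, v}, {{u, v}})"
  have uv: "u \<in> verts G" "v \<in> verts G" "u \<noteq> v" using wf_edge[OF wfG e] by auto
  have vK[simp]: "verts K = {u, v}" and eK[simp]: "edges K = {{u, v}}" by (simp_all add: K_def verts_def edges_def)
  have wfK: "wf_graph K" using uv unfolding wf_graph_def by auto
  have sub: "subgraph K G" using wfK uv e by (auto simp: subgraph_def)
  have r: "reach K x y" if "x \<in> verts K" "y \<in> verts K" for x y
  proof -
    have "reach K u v" by (rule reach_edge) auto
    moreover have "reach K v u" by (rule reach_edge) (auto simp: insert_commute)
    ultimately show ?thesis using that reach_refl[of _ K] by auto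
  qed
  have conn: "connected_graph K" using r by (auto simp: connected_graph_def)
  have nocut: "\<not> cut_vertex K w" for w
  proof
    assume "cut_vertex K w"
    then obtain x y where xy: "x \<in> verts K - {w}" "y \<in> verts K - {w}" "\<not> reach (del_vertex K w) x y" "w \<in> verts K"
      unfolding cut_vertex_def by blast
    then have "x = y" by auto
    then show False using xy reach_refl[of x "del_vertex K w"] by auto
  qed
  show ?thesis using sub conn nocut unfolding biconn_candidate_def K_def[symmetric] by blast
qed

lemma wf_edges_finite: "wf_graph G \<Longrightarrow> finite (edges G)"
proof -
  assume w: "wf_graph G"
  have "edges G \<subseteq> Pow (verts G)"
  proof
    fix e assume "e \<in> edges G"
    then obtain a b where "e = {a, b}" "a \<in> verts G" "b \<in> verts G" using w unfolding wf_graph_def by blast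
    then show "e \<in> Pow (verts G)" by auto
  qed
  moreover have "finite (verts G)" using w by (simp add: wf_graph_def)
  ultimately show ?thesis using finite_subset by blast
qed

lemma block_exists:
  assumes wfG: "wf_graph G" and K: "biconn_candidate G K"
  shows "\<exists>B. is_block G B \<and> verts K \<subseteq> verts B \<and> edges K \<subseteq> edges B"
proof -
  define A where "A = {B. biconn_candidate G B}"
  have "A \<subseteq> Pow (verts G) \<times> Pow (edges G)"
  proof
    fix B assume "B \<in> A"
    then have "verts B \<subseteq> verts G" "edges B \<subseteq> edges G" by (auto simp: A_def biconn_candidate_def subgraph_def)
    then show "B \<in> Pow (verts G) \<times> Pow (edges G)" by (cases B) (simp add: verts_def edges_def)
  qed
  moreover have "finite (Pow (verts G) \<times> Pow (edges G))"
    using wfG wf_edges_finite[OF wfG] by (simp add: wf_graph_def)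
  ultimately have fA: "finite A" using finite_subset by blast
  have KA: "K \<in> A" using K by (simp add: A_def)
  obtain m where m: "m \<in> A" "K \<le> m" "\<forall>b\<in>A. m \<le> b \<longrightarrow> m = b"
    using finite_has_maximal2[OF fA KA] by blast
  have "is_block G m"
    unfolding is_block_def
  proof (intro conjI allI impI)
    show "biconn_candidate G m" using m(1) by (simp add: A_def)
  next
    fix B' assume h: "biconn_candidate G B' \<and> verts m \<subseteq> verts B' \<and> edges m \<subseteq> edges B'"
    then have "m \<le> B'" by (cases m, cases B') (simp add: less_eq_prod_def verts_def edges_def)
    moreover have "B' \<in> A" using h by (simp add: A_def)
    ultimately show "B' = m" using m(3) by metis
  qed
  moreover have "verts K \<subseteq> verts m \<and> edges K \<subseteq> edges m"
    using m(2) by (cases m, cases K) (simp add: less_eq_prod_def verts_def edges_def)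
  ultimately show ?thesis by blast
qed


lemma rp_last: "rtrancl_path r x xs y \<Longrightarrow> last (x # xs) = y"
  by (induction rule: rtrancl_path.induct) auto

lemma rp_nth: "rtrancl_path r x xs y \<Longrightarrow> Suc i < length (x # xs) \<Longrightarrow> r ((x # xs) ! i) ((x # xs) ! Suc i)"
proof (induction arbitrary: i rule: rtrancl_path.induct)
  case (base x) then show ?case by simp
next
  case (step x y ys z)
  show ?case
  proof (cases i)
    case 0 then show ?thesis using step by simp
  next
    case (Suc j) then show ?thesis using step.IH[of j] step.prems by simp
  qed
qed

lemma rp_set: "rtrancl_path r x xs y \<Longrightarrow> z \<in> set xs \<Longrightarrow> \<exists>w. r w z"
  by (induction rule: rtrancl_path.induct) auto

lemma rtrancl_to_path:
  assumes "(x, y) \<in> R\<^sup>*"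
  obtains xs where "rtrancl_path (\<lambda>a b. (a, b) \<in> R) x xs y" "distinct (x # xs)"
proof -
  have "(\<lambda>a b. (a, b) \<in> R)\<^sup>*\<^sup>* x y" using assms by (simp add: rtranclp_rtrancl_eq)
  then obtain xs where "rtrancl_path (\<lambda>a b. (a, b) \<in> R) x xs y" by (auto simp: rtranclp_eq_rtrancl_path)
  then obtain xs' where "rtrancl_path (\<lambda>a b. (a, b) \<in> R) x xs' y" "distinct (x # xs')"
    by (rule rtrancl_path_distinct)
  then show ?thesis using that by blast
qed

lemma no_ear:
  assumes blk: "is_block G B" and wfG: "wf_graph G"
    and xy: "x \<noteq> y" "x \<in> verts B" "y \<in> verts B"
    and p: "(x, y) \<in> (eadj E)\<^sup>*" and EG: "E \<subseteq> edges G" and EB: "E \<inter> edges B = {}"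
  shows False
proof -
  obtain xs where xs: "rtrancl_path (\<lambda>a b. (a, b) \<in> eadj E) x xs y" "distinct (x # xs)"
    using rtrancl_to_path[OF p] by blast
  let ?ps = "x # xs"
  have pe: "pe ?ps \<subseteq> E" "last ?ps = y" using rtrancl_path_pe[OF xs(1)] by auto
  have bc: "biconn_candidate G B" using blk by (simp add: is_block_def)
  have "biconn_candidate G (verts B \<union> set ?ps, edges B \<union> pe ?ps)"
    by (rule ear[OF bc wfG xs(2)]) (use pe xy EG in auto)
  moreover have "verts B \<subseteq> verts (verts B \<union> set ?ps, edges B \<union> pe ?ps)"
    "edges B \<subseteq> edges (verts B \<union> set ?ps, edges B \<union> pe ?ps)" by (auto simp: verts_def edges_def)
  ultimately have "(verts B \<union> set ?ps, edges B \<union> pe ?ps) = B" using blk unfolding is_block_def by blast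
  then have "edges B \<union> pe ?ps = edges B" by (metis edges_def snd_conv)
  then have "pe ?ps \<subseteq> edges B" by blast
  moreover obtain z zs where "xs = z # zs" using pe(2) xy(1) by (cases xs) auto
  then have "{x, z} \<in> pe ?ps" by simp
  ultimately show False using pe(1) EB by blast
qed

lemma cycle_from_path:
  assumes noc: "\<not> has_cycle X" and ev: "\<forall>e\<in>edges X. e \<subseteq> verts X"
    and e1: "{n0, a} \<in> edges X" and e2: "{n0, b} \<in> edges X" and ab: "a \<noteq> b" and an: "a \<noteq> n0"
    and path: "(a, b) \<in> {(p, q). {p, q} \<in> edges X \<and> p \<noteq> n0 \<and> q \<noteq> n0}\<^sup>*"
  shows False
proof -
  let ?R = "{(p, q). {p, q} \<in> edges X \<and> p \<noteq> n0 \<and> q \<noteq> n0}"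
  obtain xs where xs: "rtrancl_path (\<lambda>p q. (p, q) \<in> ?R) a xs b" "distinct (a # xs)"
    using rtrancl_to_path[OF path] by blast
  have lst: "last (a # xs) = b" using rp_last[OF xs(1)] .
  then have xsne: "xs \<noteq> []" using ab by auto
  have nn: "n0 \<notin> set (a # xs)"
  proof
    assume "n0 \<in> set (a # xs)"
    then have "n0 \<in> set xs" using an by auto
    then show False using rp_set[OF xs(1)] by auto
  qed
  define vs where "vs = n0 # a # xs"
  have "length vs \<ge> 3" using xsne by (cases xs) (auto simp: vs_def)
  moreover have "distinct vs" using xs(2) nn by (simp add: vs_def)
  moreover have cons: "\<forall>i. Suc i < length vs \<longrightarrow> {vs ! i, vs ! Suc i} \<in> edges X"
  proof (intro allI impI)
    fix i assume i: "Suc i < length vs"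
    show "{vs ! i, vs ! Suc i} \<in> edges X"
    proof (cases i)
      case 0 then show ?thesis using e1 by (simp add: vs_def)
    next
      case (Suc j)
      then have "Suc j < length (a # xs)" using i by (simp add: vs_def)
      then have "((a # xs) ! j, (a # xs) ! Suc j) \<in> ?R" using rp_nth[OF xs(1)] by blast
      then show ?thesis using Suc by (simp add: vs_def)
    qed
  qed
  moreover have "{last vs, hd vs} \<in> edges X" using e2 lst xsne by (simp add: vs_def insert_commute)
  moreover have "set vs \<subseteq> verts X"
  proof
    fix z assume "z \<in> set vs"
    then obtain i where i: "i < length vs" "vs ! i = z" by (auto simp: in_set_conv_nth)
    show "z \<in> verts X"
    proof (cases "Suc i < length vs")
      case True then show ?thesis using cons ev i by blast
    next
      case False
      then have "i = Suc (length xs)" using i by (simp add: vs_def)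
      then have "z = b" using i lst xsne by (simp add: vs_def last_conv_nth)
      then show ?thesis using e2 ev by blast
    qed
  qed
  ultimately have "has_cycle X" unfolding has_cycle_def by blast
  then show False using noc by simp
qed


definition DS :: "'a graph \<Rightarrow> 'a set \<Rightarrow> 'a \<Rightarrow> 'a set" where
  "DS G S z = {y. reach (induced G S) z y}"
definition CC :: "'a graph \<Rightarrow> 'a \<Rightarrow> 'a set" where
  "CC G z = {y. reach G z y}"
definition node :: "'a graph \<Rightarrow> 'a graph \<Rightarrow> 'a set \<Rightarrow> 'a \<Rightarrow> nat \<times> 'a set" where
  "node G H S z = (if z \<in> S then (0, DS G S z) else if z \<in> verts G then (1, CC G z) else (2, CC H z))"

lemma verts_induced[simp]: "verts (induced G S) = S" by (simp add: induced_def verts_def)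
lemma edges_induced[simp]: "edges (induced G S) = {e \<in> edges G. e \<subseteq> S}" by (simp add: induced_def edges_def)

lemma wf_induced: "wf_graph G \<Longrightarrow> S \<subseteq> verts G \<Longrightarrow> wf_graph (induced G S)"
proof -
  assume w: "wf_graph G" and S: "S \<subseteq> verts G"
  have "finite S" using w S finite_subset unfolding wf_graph_def by blast
  moreover have "\<forall>e\<in>edges (induced G S). \<exists>u v. e = {u, v} \<and> u \<noteq> v \<and> u \<in> S \<and> v \<in> S"
  proof
    fix e assume "e \<in> edges (induced G S)"
    then have e: "e \<in> edges G" "e \<subseteq> S" by auto
    then obtain u v where "e = {u, v}" "u \<noteq> v" using w unfolding wf_graph_def by blast
    then show "\<exists>u v. e = {u, v} \<and> u \<noteq> v \<and> u \<in> S \<and> v \<in> S" using e by auto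
  qed
  ultimately show ?thesis unfolding wf_graph_def by simp
qed

lemma CC_eq: "wf_graph G \<Longrightarrow> reach G a b \<Longrightarrow> CC G a = CC G b"
proof -
  assume w: "wf_graph G" and r: "reach G a b"
  have ba: "reach G b a" using reach_sym[OF w r] .
  show ?thesis unfolding CC_def
  proof (intro equalityI subsetI)
    fix y assume "y \<in> {y. reach G a y}"
    then show "y \<in> {y. reach G b y}" using reach_trans[OF ba] by simp
  next
    fix y assume "y \<in> {y. reach G b y}"
    then show "y \<in> {y. reach G a y}" using reach_trans[OF r] by simp
  qed
qed

lemma CC_mem: "z \<in> verts G \<Longrightarrow> z \<in> CC G z"
  by (simp add: CC_def reach_refl)

lemma CC_comp: "z \<in> verts G \<Longrightarrow> CC G z \<in> components G"
  by (simp add: CC_def components_def)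

lemma DS_comp: "z \<in> S \<Longrightarrow> DS G S z \<in> components (induced G S)"
  by (simp add: DS_def components_def)

lemma DS_sub: "z \<in> S \<Longrightarrow> S \<subseteq> verts G \<Longrightarrow> DS G S z \<subseteq> CC G z"
  unfolding DS_def CC_def using reach_mono[of "induced G S" G] by auto

lemma auxG: "C \<in> components G \<Longrightarrow> D \<in> components (induced G S) \<Longrightarrow> D \<subseteq> C \<Longrightarrow>
    {(1, C), (0, D)} \<in> edges (aux_sum G H S)"
  unfolding aux_sum_def edges_def snd_conv
  by (rule UnI1, rule CollectI, rule exI[of _ C], rule exI[of _ D]) simp

lemma auxH: "C \<in> components H \<Longrightarrow> D \<in> components (induced H S) \<Longrightarrow> D \<subseteq> C \<Longrightarrow>
    {(2, C), (0, D)} \<in> edges (aux_sum G H S)"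
  unfolding aux_sum_def edges_def snd_conv
  by (rule UnI2, rule CollectI, rule exI[of _ C], rule exI[of _ D]) simp

lemma aux_ev: "induced G S = induced H S \<Longrightarrow> \<forall>e\<in>edges (aux_sum G H S). e \<subseteq> verts (aux_sum G H S)"
proof
  assume ind: "induced G S = induced H S"
  fix e assume "e \<in> edges (aux_sum G H S)"
  then have "(\<exists>C D. e = {(1, C), (0, D)} \<and> C \<in> components G \<and> D \<in> components (induced G S)) \<or>
             (\<exists>C D. e = {(2, C), (0, D)} \<and> C \<in> components H \<and> D \<in> components (induced H S))"
    unfolding aux_sum_def edges_def snd_conv by blast
  then show "e \<subseteq> verts (aux_sum G H S)"
  proof
    assume "\<exists>C D. e = {(1, C), (0, D)} \<and> C \<in> components G \<and> D \<in> components (induced G S)"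
    then obtain C D where "e = {(1, C), (0, D)}" "C \<in> components G" "D \<in> components (induced G S)" by blast
    then show ?thesis unfolding aux_sum_def verts_def fst_conv by blast
  next
    assume "\<exists>C D. e = {(2, C), (0, D)} \<and> C \<in> components H \<and> D \<in> components (induced H S)"
    then obtain C D where "e = {(2, C), (0, D)}" "C \<in> components H" "D \<in> components (induced G S)" using ind by auto
    then show ?thesis unfolding aux_sum_def verts_def fst_conv by blast
  qed
qed


locale bsetup =
  fixes G H :: "'a graph" and S :: "'a set"
  assumes wfG: "wf_graph G" and wfH: "wf_graph H"
    and SG: "S \<subseteq> verts G" and SH: "S \<subseteq> verts H"
    and disj: "(verts G - S) \<inter> (verts H - S) = {}"
    and ind: "induced G S = induced H S"
begin

abbreviation "nd \<equiv> node G H S"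
abbreviation "AX \<equiv> aux_sum G H S"

lemma GH_S: "x \<in> verts G \<Longrightarrow> x \<in> verts H \<Longrightarrow> x \<in> S"
  using disj by blast

lemma wfI: "wf_graph (induced G S)" using wf_induced[OF wfG SG] .

lemma DS_eq: "{z, z'} \<in> edges G \<Longrightarrow> z \<in> S \<Longrightarrow> z' \<in> S \<Longrightarrow> DS G S z = DS G S z'"
proof -
  assume e: "{z, z'} \<in> edges G" "z \<in> S" "z' \<in> S"
  have "reach (induced G S) z z'" by (rule reach_edge) (use e in auto)
  then show ?thesis unfolding DS_def using CC_eq[OF wfI] unfolding CC_def by blast
qed

lemma DS_subH: "z \<in> S \<Longrightarrow> DS G S z \<subseteq> CC H z"
  using DS_sub[OF _ SH, of z] ind unfolding DS_def by simp

lemma compI_eq: "components (induced H S) = components (induced G S)"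
  using ind by simp

lemma node_step_G_half:
  assumes e: "{z, z'} \<in> edges G" and zS: "z \<in> S" and z'S: "z' \<notin> S"
  shows "{nd z, nd z'} \<in> edges AX"
proof -
  have v: "z \<in> verts G" "z' \<in> verts G" using wf_edge[OF wfG e] by auto
  have n: "nd z = (0, DS G S z)" "nd z' = (1, CC G z')" using zS z'S v by (auto simp: node_def)
  have "CC G z' = CC G z" using CC_eq[OF wfG reach_edge[OF v(1) e]] by simp
  then have "DS G S z \<subseteq> CC G z'" using DS_sub[OF zS SG] by simp
  then have "{(1, CC G z'), (0, DS G S z)} \<in> edges AX"
    by (intro auxG CC_comp DS_comp v zS)
  then show ?thesis using n by (simp add: insert_commute)
qed

lemma node_step_H_half:
  assumes e: "{z, z'} \<in> edges H" and zS: "z \<in> S" and z'S: "z' \<notin> S"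
  shows "{nd z, nd z'} \<in> edges AX"
proof -
  have v: "z \<in> verts H" "z' \<in> verts H" using wf_edge[OF wfH e] by auto
  have z'G: "z' \<notin> verts G" using GH_S v z'S by blast
  have n: "nd z = (0, DS G S z)" "nd z' = (2, CC H z')" using zS z'S z'G by (auto simp: node_def)
  have "CC H z' = CC H z" using CC_eq[OF wfH reach_edge[OF v(1) e]] by simp
  then have "DS G S z \<subseteq> CC H z'" using DS_subH[OF zS] by simp
  moreover have "DS G S z \<in> components (induced H S)" using DS_comp[OF zS] compI_eq by simp
  ultimately have "{(2, CC H z'), (0, DS G S z)} \<in> edges AX"
    by (intro auxH CC_comp v)
  then show ?thesis using n by (simp add: insert_commute)
qed

lemma node_step:
  assumes e: "{z, z'} \<in> edges G \<union> edges H"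
  shows "nd z = nd z' \<or> {nd z, nd z'} \<in> edges AX"
proof -
  have e': "{z', z} \<in> edges G \<union> edges H" using e by (simp add: insert_commute)
  consider (SS) "z \<in> S" "z' \<in> S" | (SN) "z \<in> S" "z' \<notin> S" | (NS) "z \<notin> S" "z' \<in> S" | (NN) "z \<notin> S" "z' \<notin> S"
    by blast
  then show ?thesis
  proof cases
    case SS
    have "{z, z'} \<in> edges G"
    proof (cases "{z, z'} \<in> edges G")
      case False
      then have "{z, z'} \<in> edges H" using e by blast
      then have "{z, z'} \<in> edges (induced H S)" using SS by simp
      then have "{z, z'} \<in> edges (induced G S)" using ind by (simp only:)
      then show ?thesis by simp
    qed
    then show ?thesis using DS_eq SS by (simp add: node_def)
  next
    case SN
    then show ?thesis using e node_step_G_half node_step_H_half by blast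
  next
    case NS
    have "{nd z', nd z} \<in> edges AX"
      using e' NS node_step_G_half node_step_H_half by blast
    then show ?thesis by (simp add: insert_commute)
  next
    case NN
    show ?thesis
    proof (cases "{z, z'} \<in> edges G")
      case True
      have v: "z \<in> verts G" "z' \<in> verts G" using wf_edge[OF wfG True] by auto
      have "CC G z = CC G z'" using CC_eq[OF wfG reach_edge[OF v(1) True]] .
      then show ?thesis using NN v by (simp add: node_def)
    next
      case False
      then have h: "{z, z'} \<in> edges H" using e by blast
      have v: "z \<in> verts H" "z' \<in> verts H" using wf_edge[OF wfH h] by auto
      have nG: "z \<notin> verts G" "z' \<notin> verts G" using GH_S v NN by blast+
      have "CC H z = CC H z'" using CC_eq[OF wfH reach_edge[OF v(1) h]] .
      then show ?thesis using NN nG by (simp add: node_def)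
    qed
  qed
qed


lemma reroute:
  assumes noc: "\<not> has_cycle AX" and x0: "x0 \<in> verts G" and EP: "EP \<subseteq> edges G \<union> edges H"
    and a: "a \<in> CC G x0" and p: "(a, z) \<in> (eadj EP)\<^sup>*" and z: "z \<in> CC G x0"
  shows "(a, z) \<in> (eadj ((EP \<inter> edges G) \<union> edges (induced G S)))\<^sup>*"
proof -
  define C where "C = CC G x0"
  define n0 where "n0 = ((1::nat), C)"
  define R where "R = {(p, q). {p, q} \<in> edges AX \<and> p \<noteq> n0 \<and> q \<noteq> n0}"
  define E2 where "E2 = (EP \<inter> edges G) \<union> edges (induced G S)"
  have Csub: "C \<subseteq> verts G" unfolding C_def CC_def using reach_verts[OF wfG] by blast
  have inC: "w' \<in> C" if "w \<in> C" "{w, w'} \<in> edges G" for w w'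
  proof -
    have "reach G x0 w" using that(1) by (simp add: C_def CC_def)
    moreover have "reach G w w'" using reach_edge[OF _ that(2)] that(1) Csub by blast
    ultimately show ?thesis unfolding C_def CC_def using reach_trans by fastforce
  qed
  have nne: "nd w \<noteq> n0" if "w \<in> verts G \<union> verts H" "w \<notin> C" for w
  proof
    assume h: "nd w = n0"
    show False
    proof (cases "w \<in> S")
      case True then show False using h by (simp add: node_def n0_def)
    next
      case False
      show False
      proof (cases "w \<in> verts G")
        case True
        then have "CC G w = C" using h False by (simp add: node_def n0_def)
        then show False using CC_mem[OF True] that(2) by simp
      next
        case False
        then show False using h \<open>w \<notin> S\<close> by (simp add: node_def n0_def)
      qed
    qed
  qed
  have Dadj: "{n0, (0, DS G S c)} \<in> edges AX" if "c \<in> S" "c \<in> C" for c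
  proof -
    have "reach G x0 c" using that(2) by (simp add: C_def CC_def)
    then have "CC G c = C" using CC_eq[OF wfG] by (simp add: C_def)
    then have "DS G S c \<subseteq> C" using DS_sub[OF that(1) SG] by simp
    then have "{(1, C), (0, DS G S c)} \<in> edges AX"
      by (intro auxG DS_comp that(1)) (simp add: C_def CC_comp x0)
    then show ?thesis by (simp add: n0_def)
  qed
  have ev: "\<forall>e\<in>edges AX. e \<subseteq> verts AX" using aux_ev[OF ind] .
  have Rstep: "(nd y, nd w) \<in> R\<^sup>*" if "{y, w} \<in> edges G \<union> edges H" "nd y \<noteq> n0" "nd w \<noteq> n0" for y w
    using node_step[OF that(1)] that(2,3) by (auto simp: R_def)
  have vEP: "w \<in> verts G \<union> verts H" if "{y, w} \<in> EP" for y w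
    using that EP wf_edge[OF wfG, of y w] wf_edge[OF wfH, of y w] by blast
  define Inv where "Inv w \<longleftrightarrow> (w \<in> C \<longrightarrow> (a, w) \<in> (eadj E2)\<^sup>*) \<and>
      (w \<notin> C \<longrightarrow> w \<in> verts G \<union> verts H \<and>
        (\<exists>c. c \<in> S \<and> c \<in> C \<and> (a, c) \<in> (eadj E2)\<^sup>* \<and> ((0, DS G S c), nd w) \<in> R\<^sup>*))" for w
  have "Inv z" using p
  proof (induction rule: rtrancl_induct)
    case base
    then show ?case using a by (simp add: Inv_def C_def)
  next
    case (step y w)
    have eyw: "{y, w} \<in> EP" using step(2) by (simp add: eadj_def)
    have eGH: "{y, w} \<in> edges G \<union> edges H" using eyw EP by blast
    have wv: "w \<in> verts G \<union> verts H" using vEP[OF eyw] .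
    show ?case
    proof (cases "y \<in> C")
      case yC: True
      then have ay: "(a, y) \<in> (eadj E2)\<^sup>*" using step(3) by (simp add: Inv_def)
      show ?thesis
      proof (cases "w \<in> C")
        case wC: True
        have "{y, w} \<in> E2"
        proof (cases "{y, w} \<in> edges G")
          case True then show ?thesis using eyw by (simp add: E2_def)
        next
          case False
          then have h: "{y, w} \<in> edges H" using eGH by blast
          have "y \<in> verts H" "w \<in> verts H" using wf_edge[OF wfH h] by auto
          moreover have "y \<in> verts G" "w \<in> verts G" using yC wC Csub by auto
          ultimately have "y \<in> S" "w \<in> S" using GH_S by auto
          then have "{y, w} \<in> edges (induced H S)" using h by simp
          then have "{y, w} \<in> edges (induced G S)" using ind by (simp only:)
          then show ?thesis by (simp add: E2_def)
        qed
        then have "(a, w) \<in> (eadj E2)\<^sup>*" using ay by (simp add: eadj_def rtrancl_into_rtrancl)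
        then show ?thesis using wC by (simp add: Inv_def)
      next
        case wC: False
        have "{y, w} \<notin> edges G" using inC yC wC by blast
        then have h: "{y, w} \<in> edges H" using eGH by blast
        have "y \<in> verts H" using wf_edge[OF wfH h] by auto
        then have yS: "y \<in> S" using GH_S yC Csub by blast
        have "nd y \<noteq> n0" using yS by (simp add: node_def n0_def)
        then have "(nd y, nd w) \<in> R\<^sup>*" using Rstep[OF eGH] nne[OF wv wC] by blast
        moreover have "nd y = (0, DS G S y)" using yS by (simp add: node_def)
        ultimately show ?thesis using wC wv yS yC ay by (auto simp: Inv_def)
      qed
    next
      case yC: False
      then obtain c where c: "c \<in> S" "c \<in> C" "(a, c) \<in> (eadj E2)\<^sup>*" "((0, DS G S c), nd y) \<in> R\<^sup>*"
        and yv: "y \<in> verts G \<union> verts H"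
        using step(3) by (auto simp: Inv_def)
      show ?thesis
      proof (cases "w \<in> C")
        case wC: False
        have "(nd y, nd w) \<in> R\<^sup>*" using Rstep[OF eGH] nne[OF wv wC] nne[OF yv yC] by blast
        then have "((0, DS G S c), nd w) \<in> R\<^sup>*" using c(4) by simp
        then show ?thesis using wC wv c by (auto simp: Inv_def)
      next
        case wC: True
        have "{w, y} \<notin> edges G" using inC yC wC by blast
        then have h: "{y, w} \<in> edges H" using eGH by (auto simp: insert_commute)
        have "w \<in> verts H" using wf_edge[OF wfH h] by auto
        then have wS: "w \<in> S" using GH_S wC Csub by blast
        have "nd w = (0, DS G S w)" using wS by (simp add: node_def)
        moreover have "(nd y, nd w) \<in> R\<^sup>*" using Rstep[OF eGH] nne[OF yv yC] wS by (simp add: node_def n0_def)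
        ultimately have path: "((0, DS G S c), (0, DS G S w)) \<in> R\<^sup>*" using c(4) by simp
        have "DS G S c = DS G S w"
        proof (rule ccontr)
          assume ne: "DS G S c \<noteq> DS G S w"
          show False
            by (rule cycle_from_path[OF noc ev Dadj[OF c(1,2)] Dadj[OF wS wC]])
               (use ne path in \<open>auto simp: n0_def R_def\<close>)
        qed
        moreover have "w \<in> DS G S w" using wS by (simp add: DS_def reach_refl)
        ultimately have "w \<in> DS G S c" by simp
        then have "reach (induced G S) c w" by (simp add: DS_def)
        then have "(c, w) \<in> (eadj (edges (induced G S)))\<^sup>*" by (simp add: reach_def adj_rel_eadj)
        then have "(c, w) \<in> (eadj E2)\<^sup>*" by (rule eadj_mono[rotated]) (simp add: E2_def)
        then have "(a, w) \<in> (eadj E2)\<^sup>*" using c(3) by simp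
        then show ?thesis using wC by (simp add: Inv_def)
      qed
    qed
  qed
  then show ?thesis using z by (simp add: Inv_def C_def E2_def)
qed


lemma core:
  assumes noc: "\<not> has_cycle AX" and Fblk: "is_block (gsum G H) F"
    and eS: "e \<in> edges (induced G S)" and eF: "e \<in> edges F"
    and uvF: "{u, v} \<in> edges F" and uvG: "{u, v} \<in> edges G"
  shows "\<exists>B. S_block G G S B \<and> {u, v} \<in> edges B"
proof -
  obtain B where blk: "is_block G B" and uvB: "{u, v} \<in> edges B"
    using block_exists[OF wfG edge_candidate[OF wfG uvG]] by (auto simp: edges_def)
  show ?thesis
  proof (cases "\<exists>e'\<in>edges (induced G S). e' \<in> edges B")
    case True
    then show ?thesis using blk uvB unfolding S_block_def by blast
  next
    case False
    then have nS: "edges (induced G S) \<inter> edges B = {}" by blast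
    have Bbc: "biconn_candidate G B" using blk by (simp add: is_block_def)
    have wfB: "wf_graph B" using biconn_wf[OF Bbc] .
    have Bsub: "verts B \<subseteq> verts G" "edges B \<subseteq> edges G" using Bbc by (auto simp: biconn_candidate_def subgraph_def)
    have Fbc: "biconn_candidate (gsum G H) F" using Fblk by (simp add: is_block_def)
    have wfF: "wf_graph F" using biconn_wf[OF Fbc] .
    have FE: "edges F \<subseteq> edges G \<union> edges H"
      using Fbc by (auto simp: biconn_candidate_def subgraph_def gsum_def edges_def)
    have Fconn: "reach F p q" if "p \<in> verts F" "q \<in> verts F" for p q
      using Fbc that by (auto simp: biconn_candidate_def connected_graph_def)
    define EP where "EP = edges F - edges B"
    have uvv: "u \<in> verts B" "v \<in> verts B" "u \<noteq> v" using wf_edge[OF wfB uvB] by auto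
    have uvFv: "u \<in> verts F" "v \<in> verts F" using wf_edge[OF wfF uvF] by auto
    have notB: "{p, q} \<notin> edges B" if "q \<notin> verts B" for p q
      using wf_edge[OF wfB, of p q] that by auto
    have "\<exists>x y. x \<noteq> y \<and> x \<in> verts B \<and> y \<in> verts B \<and> (x, y) \<in> (eadj EP)\<^sup>*"
    proof -
      obtain s t where st: "e = {s, t}" "s \<noteq> t"
        using eS wfG unfolding wf_graph_def by auto
      have stF: "s \<in> verts F" "t \<in> verts F" using wf_edge[OF wfF, of s t] eF st by auto
      have eB: "e \<notin> edges B" using nS eS by blast
      show ?thesis
      proof (cases "s \<in> verts B \<and> t \<in> verts B")
        case True
        have "(s, t) \<in> eadj EP" using eF eB st by (simp add: EP_def eadj_def)
        then show ?thesis using True st by (intro exI[of _ s] exI[of _ t]) auto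
      next
        case False
        then obtain r where r: "r \<in> verts F" "r \<notin> verts B" using stF by blast
        have "(u, r) \<in> (eadj (edges F))\<^sup>*" using Fconn[OF uvFv(1) r(1)] by (simp add: reach_def adj_rel_eadj)
        then have "r \<in> verts B \<or> (\<exists>x\<in>verts B. (x, r) \<in> (eadj EP)\<^sup>*)"
        proof (induction rule: rtrancl_induct)
          case base then show ?case using uvv by simp
        next
          case (step y w)
          show ?case
          proof (cases "w \<in> verts B")
            case False
            then have "{y, w} \<in> EP" using step(2) notB by (simp add: EP_def eadj_def)
            then have yw: "(y, w) \<in> eadj EP" by (simp add: eadj_def)
            show ?thesis
            proof (cases "y \<in> verts B")
              case True then show ?thesis using yw by blast
            next
              case False
              then obtain x where "x \<in> verts B" "(x, y) \<in> (eadj EP)\<^sup>*" using step(3) by blast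
              then show ?thesis using yw by (meson rtrancl_into_rtrancl)
            qed
          qed simp
        qed
        then obtain x where x: "x \<in> verts B" "(x, r) \<in> (eadj EP)\<^sup>*" using r by blast
        obtain b where b: "b \<in> verts B" "b \<noteq> x" "b \<in> verts F" using uvv uvFv by metis
        have "reach (del_vertex F x) r b"
          by (rule biconn_reach_del[OF Fbc]) (use r b x in auto)
        then have "(r, b) \<in> (eadj (edges (del_vertex F x)))\<^sup>*" by (simp add: reach_def adj_rel_eadj)
        then have "(\<exists>y\<in>verts B - {x}. (r, y) \<in> (eadj EP)\<^sup>*) \<or> ((r, b) \<in> (eadj EP)\<^sup>* \<and> b \<notin> verts B)"
        proof (induction rule: rtrancl_induct)
          case base then show ?case using r by simp
        next
          case (step y w)
          show ?case
          proof (cases "\<exists>y\<in>verts B - {x}. (r, y) \<in> (eadj EP)\<^sup>*")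
            case True then show ?thesis by blast
          next
            case False
            then have ry: "(r, y) \<in> (eadj EP)\<^sup>*" "y \<notin> verts B" using step(3) by auto
            have e': "{y, w} \<in> edges F" "x \<notin> {y, w}" using step(2) by (auto simp: eadj_def)
            have "{w, y} \<notin> edges B" using notB ry(2) by blast
            then have "{y, w} \<in> EP" using e' by (simp add: EP_def insert_commute)
            then have rw: "(r, w) \<in> (eadj EP)\<^sup>*" using ry(1) by (simp add: eadj_def rtrancl_into_rtrancl)
            show ?thesis
            proof (cases "w \<in> verts B")
              case True
              then have "w \<in> verts B - {x}" using e'(2) by auto
              then show ?thesis using rw by (intro disjI1 bexI[of _ w])
            next
              case False then show ?thesis using rw by (intro disjI2 conjI)
            qed
          qed
        qed
        then have "\<exists>y\<in>verts B - {x}. (r, y) \<in> (eadj EP)\<^sup>*" using b(1) by auto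
        then obtain y where y: "y \<in> verts B" "y \<noteq> x" "(r, y) \<in> (eadj EP)\<^sup>*" by auto
        have "(x, y) \<in> (eadj EP)\<^sup>*" using rtrancl_trans[OF x(2) y(3)] .
        then show ?thesis using x(1) y(1,2) by (intro exI[of _ x] exI[of _ y]) auto
      qed
    qed
    then obtain x y where xy: "x \<noteq> y" "x \<in> verts B" "y \<in> verts B" "(x, y) \<in> (eadj EP)\<^sup>*" by auto
    have xG: "x \<in> verts G" using xy Bsub by auto
    have "reach B x y" using Bbc xy by (auto simp: biconn_candidate_def connected_graph_def)
    then have "reach G x y" by (rule reach_mono[OF Bsub])
    then have yC: "y \<in> CC G x" by (simp add: CC_def)
    have EPs: "EP \<subseteq> edges G \<union> edges H" using FE by (auto simp: EP_def)
    have p1: "(x, y) \<in> (eadj ((EP \<inter> edges G) \<union> edges (induced G S)))\<^sup>*"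
      by (rule reroute[OF noc xG EPs CC_mem[OF xG] xy(4) yC])
    have p2: "(EP \<inter> edges G) \<union> edges (induced G S) \<subseteq> edges G" by auto
    have p3: "((EP \<inter> edges G) \<union> edges (induced G S)) \<inter> edges B = {}"
      using nS by (auto simp: EP_def)
    have False by (rule no_ear[OF blk wfG xy(1,2,3) p1 p2 p3])
    then show ?thesis ..
  qed
qed

end

lemma has_cycle_map:
  assumes hc: "has_cycle X" and inj: "inj g"
    and ee: "\<forall>e\<in>edges X. g ` e \<in> edges Y" and vv: "g ` verts X \<subseteq> verts Y"
  shows "has_cycle Y"
proof -
  obtain vs where vs: "length vs \<ge> 3" "distinct vs" "set vs \<subseteq> verts X"
    "\<forall>i. Suc i < length vs \<longrightarrow> {vs ! i, vs ! Suc i} \<in> edges X" "{last vs, hd vs} \<in> edges X"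
    using hc unfolding has_cycle_def by blast
  have ne: "vs \<noteq> []" using vs(1) by auto
  let ?ws = "map g vs"
  have "length ?ws \<ge> 3" using vs(1) by simp
  moreover have "distinct ?ws" using vs(2) inj by (simp add: distinct_map inj_on_def)
  moreover have "set ?ws \<subseteq> verts Y" using vs(3) vv by auto
  moreover have "\<forall>i. Suc i < length ?ws \<longrightarrow> {?ws ! i, ?ws ! Suc i} \<in> edges Y"
  proof (intro allI impI)
    fix i assume i: "Suc i < length ?ws"
    then have "{vs ! i, vs ! Suc i} \<in> edges X" using vs(4) by simp
    then have "g ` {vs ! i, vs ! Suc i} \<in> edges Y" using ee by blast
    then show "{?ws ! i, ?ws ! Suc i} \<in> edges Y" using i by simp
  qed
  moreover have "{last ?ws, hd ?ws} \<in> edges Y"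
  proof -
    have "g ` {last vs, hd vs} \<in> edges Y" using ee vs(5) by blast
    then show ?thesis using ne by (simp add: last_map hd_map)
  qed
  ultimately show ?thesis unfolding has_cycle_def by blast
qed

definition sw :: "nat \<times> 'a set \<Rightarrow> nat \<times> 'a set" where
  "sw p = (if fst p = 1 then 2 else if fst p = 2 then 1 else fst p, snd p)"

lemma sw_inj: "inj sw"
  unfolding inj_def sw_def by (auto split: if_splits simp: prod_eq_iff)

lemma aux_swap:
  assumes ind: "induced G S = induced H S" and hc: "has_cycle (aux_sum H G S)"
  shows "has_cycle (aux_sum G H S)"
proof (rule has_cycle_map[OF hc sw_inj])
  show "\<forall>e\<in>edges (aux_sum H G S). sw ` e \<in> edges (aux_sum G H S)"
  proof
    fix e assume "e \<in> edges (aux_sum H G S)"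
    then have "(\<exists>C D. e = {(1, C), (0, D)} \<and> C \<in> components H \<and> D \<in> components (induced H S) \<and> D \<subseteq> C) \<or>
             (\<exists>C D. e = {(2, C), (0, D)} \<and> C \<in> components G \<and> D \<in> components (induced G S) \<and> D \<subseteq> C)"
      unfolding aux_sum_def edges_def snd_conv by blast
    then show "sw ` e \<in> edges (aux_sum G H S)"
    proof
      assume "\<exists>C D. e = {(1, C), (0, D)} \<and> C \<in> components H \<and> D \<in> components (induced H S) \<and> D \<subseteq> C"
      then obtain C D where h: "e = {(1, C), (0, D)}" "C \<in> components H" "D \<in> components (induced H S)" "D \<subseteq> C" by blast
      have "sw ` e = {(2, C), (0, D)}" using h(1) by (simp add: sw_def)
      then show ?thesis using auxH[OF h(2,3,4)] by simp
    next
      assume "\<exists>C D. e = {(2, C), (0, D)} \<and> C \<in> components G \<and> D \<in> components (induced G S) \<and> D \<subseteq> C"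
      then obtain C D where h: "e = {(2, C), (0, D)}" "C \<in> components G" "D \<in> components (induced G S)" "D \<subseteq> C" by blast
      have "sw ` e = {(1, C), (0, D)}" using h(1) by (simp add: sw_def)
      then show ?thesis using auxG[OF h(2,3,4)] by simp
    qed
  qed
next
  show "sw ` verts (aux_sum H G S) \<subseteq> verts (aux_sum G H S)"
  proof
    fix n assume "n \<in> sw ` verts (aux_sum H G S)"
    then obtain p where p: "n = sw p" "p \<in> verts (aux_sum H G S)" by blast
    then have "(\<exists>D. p = (0, D) \<and> D \<in> components (induced H S)) \<or> (\<exists>C. p = (1, C) \<and> C \<in> components H) \<or>
       (\<exists>C. p = (2, C) \<and> C \<in> components G)"
      unfolding aux_sum_def verts_def fst_conv by blast
    then show "n \<in> verts (aux_sum G H S)"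
    proof (elim disjE exE conjE)
      fix D assume "p = (0, D)" "D \<in> components (induced H S)"
      then show ?thesis using p(1) ind unfolding aux_sum_def verts_def fst_conv by (simp add: sw_def)
    next
      fix C assume "p = (1, C)" "C \<in> components H"
      then show ?thesis using p(1) unfolding aux_sum_def verts_def fst_conv by (simp add: sw_def)
    next
      fix C assume "p = (2, C)" "C \<in> components G"
      then show ?thesis using p(1) unfolding aux_sum_def verts_def fst_conv by (simp add: sw_def)
    qed
  qed
qed


theorem lemma3p3:
  fixes G H :: "'a graph" and S :: "'a set" and d :: nat
    and labG labH :: "'a \<Rightarrow> nat" and F :: "'a graph" and u v :: 'a
  assumes "labeled_boundaried d G S labG"
    and "labeled_boundaried d H S labH"
    and "compatible G labG H labH S"
    and "\<not> has_cycle (aux_sum G H S)"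
    and "S_block (gsum G H) G S F"
    and "{u, v} \<in> edges F"
  shows "\<exists>B. (S_block G G S B \<and> {u, v} \<in> edges B) \<or> (S_block H H S B \<and> {u, v} \<in> edges B)"
proof -
  have wfG: "wf_graph G" and SG: "S \<subseteq> verts G" using assms(1) by (auto simp: labeled_boundaried_def)
  have wfH: "wf_graph H" and SH: "S \<subseteq> verts H" using assms(2) by (auto simp: labeled_boundaried_def)
  have disj: "(verts G - S) \<inter> (verts H - S) = {}" and ind: "induced G S = induced H S"
    using assms(3) by (auto simp: compatible_def)
  interpret g: bsetup G H S using wfG wfH SG SH disj ind by unfold_locales
  interpret h: bsetup H G S using wfG wfH SG SH disj ind by unfold_locales (auto simp: Int_commute)
  have Fblk: "is_block (gsum G H) F" using assms(5) by (simp add: S_block_def)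
  obtain e where eS: "e \<in> edges (induced G S)" and eF: "e \<in> edges F"
    using assms(5) unfolding S_block_def by blast
  have Fbc: "biconn_candidate (gsum G H) F" using Fblk by (simp add: is_block_def)
  have "edges F \<subseteq> edges G \<union> edges H"
    using Fbc by (auto simp: biconn_candidate_def subgraph_def gsum_def edges_def)
  then have uvGH: "{u, v} \<in> edges G \<or> {u, v} \<in> edges H" using assms(6) by blast
  then show ?thesis
  proof
    assume uvG: "{u, v} \<in> edges G"
    obtain B where "S_block G G S B" "{u, v} \<in> edges B"
      using g.core[OF assms(4) Fblk eS eF assms(6) uvG] by blast
    then show ?thesis by blast
  next
    assume uvH: "{u, v} \<in> edges H"
    have noc: "\<not> has_cycle (aux_sum H G S)" using aux_swap[OF ind] assms(4) by blast
    have "gsum H G = gsum G H" by (simp add: gsum_def Un_commute)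
    then have Fblk': "is_block (gsum H G) F" using Fblk by simp
    have eS': "e \<in> edges (induced H S)" using eS ind by simp
    obtain B where "S_block H H S B" "{u, v} \<in> edges B"
      using h.core[OF noc Fblk' eS' eF assms(6) uvH] by blast
    then show ?thesis by blast
  qed
qed

end
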